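(* There is an absolute constant $c>0$ such that for infinitely many $d$ there exists a high-multiplicity Bin Packing instance with $d$ item types (sizes $s_1,\dots,s_d$, multiplicities $a_1,\dots,a_d\in\mathbb{Z}_{\ge 0}$, bin capacity $C$) for which every optimal solution $x$ of its configuration ILP satisfies $|\operatorname{supp}(x)|\ge 2^{cd}$, i.e. $|\operatorname{supp}(x)|\in 2^{\Omega(d)}$. More concretely, for every integer $d'\ge 1$ there is such an instance with $d=12d'+4$ item types in which every optimal solution uses at least $2^{d'}-1$ pairwise distinct configurations.
   Context: High-multiplicity Bin Packing: given $d$ item types with sizes $s_i$, amounts $a_i\in\mathbb{Z}_{\ge0}$ and a bin capacity $C$, pack all items into as few bins as possible so that every bin has total size at most $C$. A configuration is a vector $p\in\mathbb{Z}^d_{\ge 0}$ with $s^Tp\le C$ (a feasible filling of one bin); let $\mathcal{C}$ be the set of all configurations. The configuration ILP is $\min\{\mathbf{1}^Tx : \sum_{p\in\mathcal{C}} x_p\, p = a,\ x\in\mathbb{Z}^{\mathcal{C}}_{\ge0}\}$, where $x_p$ is the number of bins filled with configuration $p$. The support of a vector $x$ is $\operatorname{supp}(x)=\{p: x_p\neq 0\}$. *)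

theory Defs
  imports Complex_Main
begin

text \<open>High-multiplicity bin packing with d item types indexed by 0..<d.
  Sizes s, amounts a are functions nat => nat (only indices < d matter),
  C is the bin capacity.\<close>

definition is_config :: "nat \<Rightarrow> (nat \<Rightarrow> nat) \<Rightarrow> nat \<Rightarrow> (nat \<Rightarrow> nat) \<Rightarrow> bool" where
  "is_config d s C p \<longleftrightarrow> (\<forall>i\<ge>d. p i = 0) \<and> (\<Sum>i<d. s i * p i) \<le> C"

definition supp :: "((nat \<Rightarrow> nat) \<Rightarrow> nat) \<Rightarrow> (nat \<Rightarrow> nat) set" where
  "supp x = {p. x p \<noteq> 0}"

definition ilp_feasible ::
  "nat \<Rightarrow> (nat \<Rightarrow> nat) \<Rightarrow> (nat \<Rightarrow> nat) \<Rightarrow> nat \<Rightarrow> ((nat \<Rightarrow> nat) \<Rightarrow> nat) \<Rightarrow> bool" where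
  "ilp_feasible d s a C x \<longleftrightarrow>
     finite (supp x) \<and> (\<forall>p\<in>supp x. is_config d s C p) \<and>
     (\<forall>i<d. (\<Sum>p\<in>supp x. x p * p i) = a i)"

definition ilp_value :: "((nat \<Rightarrow> nat) \<Rightarrow> nat) \<Rightarrow> nat" where
  "ilp_value x = (\<Sum>p\<in>supp x. x p)"

definition ilp_optimal ::
  "nat \<Rightarrow> (nat \<Rightarrow> nat) \<Rightarrow> (nat \<Rightarrow> nat) \<Rightarrow> nat \<Rightarrow> ((nat \<Rightarrow> nat) \<Rightarrow> nat) \<Rightarrow> bool" where
  "ilp_optimal d s a C x \<longleftrightarrow> ilp_feasible d s a C x \<and>
     (\<forall>y. ilp_feasible d s a C y \<longrightarrow> ilp_value x \<le> ilp_value y)"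

definition valid_instance :: "nat \<Rightarrow> (nat \<Rightarrow> nat) \<Rightarrow> (nat \<Rightarrow> nat) \<Rightarrow> nat \<Rightarrow> bool" where
  "valid_instance d s a C \<longleftrightarrow> (\<forall>i<d. 0 < s i \<and> s i \<le> C) \<and> (\<exists>x. ilp_optimal d s a C x)"

end

theory Submission
  imports Defs
begin


lemma pow2_sum: "(\<Sum>i<n. (2::nat)^i) = 2^n - 1"
  by (induction n) auto

lemma popcount:
  "\<forall>c M. (\<forall>e\<ge>M. c e = 0) \<longrightarrow> (\<Sum>e<M. c e * 2^e) = (2::nat)^N - 1 \<longrightarrow>
     N \<le> (\<Sum>e<M. c e) \<and> ((\<Sum>e<M. c e) = N \<longrightarrow> (\<forall>e<M. c e \<le> 1))"
proof (induction N)
  case 0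
  then show ?case by auto
next
  case (Suc N)
  show ?case
  proof (intro allI impI)
    fix c :: "nat \<Rightarrow> nat" and M
    assume z: "\<forall>e\<ge>M. c e = 0" and s: "(\<Sum>e<M. c e * 2^e) = 2^Suc N - 1"
    have ge1: "(1::nat) \<le> 2^N" by simp
    have pos: "(0::nat) < 2^Suc N - 1"
    proof -
      have "2^Suc N = 2 * (2::nat)^N" by simp
      with ge1 show ?thesis by linarith
    qed
    have "M \<noteq> 0" using s pos by (cases "M = 0") auto
    then obtain M' where M': "M = Suc M'" by (cases M) auto
    have split1: "(\<Sum>e<M. c e * 2^e) = c 0 + 2 * (\<Sum>e<M'. c (Suc e) * 2^e)"
      unfolding M' sum.lessThan_Suc_shift by (simp add: sum_distrib_left mult_ac)
    have split2: "(\<Sum>e<M. c e) = c 0 + (\<Sum>e<M'. c (Suc e))"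
      unfolding M' sum.lessThan_Suc_shift by simp
    have odd: "odd (c 0)"
    proof -
      have "odd ((2::nat)^Suc N - 1)" by simp
      then show ?thesis using s split1 by (metis even_add even_mult_iff dvd_triv_left)
    qed
    define h where "h = (c 0 - 1) div 2"
    have c0: "c 0 = 2 * h + 1" using odd unfolding h_def by presburger
    define c' where "c' = (\<lambda>e. c (Suc e) + (if e = 0 then h else 0))"
    have z': "\<forall>e\<ge>M. c' e = 0" using z \<open>M \<noteq> 0\<close> unfolding c'_def by auto
    have cM: "c M = 0" using z by auto
    have shift: "(\<Sum>e<M. c (Suc e) * 2^e) = (\<Sum>e<M'. c (Suc e) * 2^e)"
      using cM M' by simp
    have shift2: "(\<Sum>e<M. c (Suc e)) = (\<Sum>e<M'. c (Suc e))"
      using cM M' by simp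
    have s'1: "(\<Sum>e<M. c' e * 2^e) = (\<Sum>e<M. c (Suc e) * 2^e) + h"
    proof -
      have "(\<Sum>e<M. c' e * 2^e) = (\<Sum>e<M. c (Suc e) * 2^e + (if e = 0 then h else 0))"
        by (rule sum.cong) (auto simp: c'_def algebra_simps)
      also have "\<dots> = (\<Sum>e<M. c (Suc e) * 2^e) + (\<Sum>e<M. if e = 0 then h else 0)"
        by (rule sum.distrib)
      finally show ?thesis using \<open>M \<noteq> 0\<close> by simp
    qed
    have s'2: "(\<Sum>e<M. c' e) = (\<Sum>e<M. c (Suc e)) + h"
    proof -
      have "(\<Sum>e<M. c' e) = (\<Sum>e<M. c (Suc e) + (if e = 0 then h else 0))"
        by (rule sum.cong) (auto simp: c'_def algebra_simps)
      also have "\<dots> = (\<Sum>e<M. c (Suc e)) + (\<Sum>e<M. if e = 0 then h else 0)"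
        by (rule sum.distrib)
      finally show ?thesis using \<open>M \<noteq> 0\<close> by simp
    qed
    have "(\<Sum>e<M. c' e * 2^e) = 2^N - 1"
    proof -
      have "2 * h + 1 + 2 * (\<Sum>e<M'. c (Suc e) * 2^e) = 2 * 2^N - 1"
        using s split1 c0 by simp
      then have "h + (\<Sum>e<M'. c (Suc e) * 2^e) = 2^N - 1"
        using ge1 by linarith
      then show ?thesis using s'1 shift by simp
    qed
    then have IH: "N \<le> (\<Sum>e<M. c' e) \<and> ((\<Sum>e<M. c' e) = N \<longrightarrow> (\<forall>e<M. c' e \<le> 1))"
      using Suc.IH z' by blast
    have tot: "(\<Sum>e<M. c e) = (\<Sum>e<M. c' e) + h + 1"
      using split2 s'2 shift2 c0 by simp
    show "Suc N \<le> (\<Sum>e<M. c e) \<and> ((\<Sum>e<M. c e) = Suc N \<longrightarrow> (\<forall>e<M. c e \<le> 1))"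
    proof
      show "Suc N \<le> (\<Sum>e<M. c e)" using IH tot by simp
      show "(\<Sum>e<M. c e) = Suc N \<longrightarrow> (\<forall>e<M. c e \<le> 1)"
      proof (intro impI allI)
        fix e assume eq: "(\<Sum>e<M. c e) = Suc N" and e: "e < M"
        have h0: "h = 0" and eqN: "(\<Sum>e<M. c' e) = N" using IH tot eq by auto
        show "c e \<le> 1"
        proof (cases e)
          case 0 then show ?thesis using c0 h0 by simp
        next
          case (Suc e')
          show ?thesis
          proof (cases "e' < M")
            case True
            then have "c' e' \<le> 1" using IH eqN by blast
            then show ?thesis unfolding c'_def using Suc by simp
          next
            case False then show ?thesis using z Suc by simp
          qed
        qed
      qed
    qed
  qed
qed



lemma digits_bound:
  fixes u :: "nat \<Rightarrow> nat"
  shows "(\<forall>k<K. u k < B) \<Longrightarrow> (\<Sum>k<K. u k * B^k) < B^K"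
proof (induction K)
  case 0 then show ?case by simp
next
  case (Suc K)
  then have IH: "(\<Sum>k<K. u k * B^k) < B^K" and uK: "u K + 1 \<le> B" by auto
  have "(\<Sum>k<Suc K. u k * B^k) = (\<Sum>k<K. u k * B^k) + u K * B^K" by simp
  also have "\<dots> < B^K + u K * B^K" using IH by simp
  also have "\<dots> = (u K + 1) * B^K" by simp
  also have "\<dots> \<le> B * B^K" using uK by (rule mult_right_mono) simp
  finally show ?case by simp
qed

lemma digits_unique:
  fixes u w :: "nat \<Rightarrow> nat"
  shows "(\<forall>k<K. u k < B) \<Longrightarrow> (\<forall>k<K. w k < B) \<Longrightarrow>
    (\<Sum>k<K. u k * B^k) = (\<Sum>k<K. w k * B^k) \<Longrightarrow> \<forall>k<K. u k = w k"
proof (induction K)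
  case 0 then show ?case by simp
next
  case (Suc K)
  have bu: "(\<Sum>k<K. u k * B^k) < B^K" using Suc.prems(1) by (intro digits_bound) auto
  have bw: "(\<Sum>k<K. w k * B^k) < B^K" using Suc.prems(2) by (intro digits_bound) auto
  have eq: "(\<Sum>k<K. u k * B^k) + u K * B^K = (\<Sum>k<K. w k * B^k) + w K * B^K"
    using Suc.prems(3) by simp
  have nz: "B^K \<noteq> 0" proof assume "B^K = 0" with bu show False by simp qed
  have "((\<Sum>k<K. u k * B^k) + u K * B^K) div B^K = u K" by (simp only: div_mult_self1[OF nz] div_less[OF bu])
  moreover have "((\<Sum>k<K. w k * B^k) + w K * B^K) div B^K = w K" by (simp only: div_mult_self1[OF nz] div_less[OF bw])
  ultimately have uw: "u K = w K" using eq by simp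
  then have e2: "(\<Sum>k<K. u k * B^k) = (\<Sum>k<K. w k * B^k)" using eq by simp
  have p1: "\<forall>k<K. u k < B" and p2: "\<forall>k<K. w k < B" using Suc.prems by auto
  have "\<forall>k<K. u k = w k" using Suc.IH[OF p1 p2 e2] .
  then show ?case using uw less_Suc_eq by auto
qed



definition ind :: "nat \<Rightarrow> nat \<Rightarrow> nat" where "ind a i = (if i = a then 1 else 0)"

lemma sum_ind: assumes "a < m" shows "(\<Sum>i<m. ind a i * p i) = p a"
proof -
  have "(\<Sum>i<m. ind a i * p i) = (\<Sum>i<m. if a = i then p i else 0)"
    by (rule sum.cong) (auto simp: ind_def)
  also have "\<dots> = p a" using assms by simp
  finally show ?thesis .
qed

definition MM :: "nat \<Rightarrow> nat" where "MM n = 2^(2^n)"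

definition alpha :: "nat \<Rightarrow> nat \<Rightarrow> nat \<Rightarrow> nat" where
"alpha n k i = (if k < 5*n then
   (if k mod 5 = 0 then ind (7*(k div 5)) i + ind (7*(k div 5)+1) i
   else if k mod 5 = 1 then ind (7*(k div 5)+2) i + ind (7*(k div 5)+4) i + MM n * ind (7*(k div 5)+1) i
   else if k mod 5 = 2 then ind (7*(k div 5)+3) i + ind (7*(k div 5)+5) i + MM n * ind (7*(k div 5)) i
   else if k mod 5 = 3 then ind (7*(k div 5)+3) i + 2^(2^(k div 5)) * ind (7*(k div 5)+2) i + ind (7*(k div 5)+6) i
   else (if Suc (k div 5) < n then ind (7*(k div 5)+9) i + ind (7*(k div 5)+10) i else ind (7*n) i)
        + ind (7*(k div 5)+6) i)
  else if k = 5*n then ind 2 i + ind 3 i else 0)"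

definition DD :: "nat \<Rightarrow> nat \<Rightarrow> (nat \<Rightarrow> nat) \<Rightarrow> nat" where
  "DD n k p = (\<Sum>i<7*n+1. alpha n k i * p i)"

definition cc :: "nat \<Rightarrow> nat \<Rightarrow> nat" where
  "cc n k = (if k < 5*n then (if k mod 5 = 0 then 1 else MM n) else if k = 5*n then 1 else 0)"

lemma sum_ind2: "a < m \<Longrightarrow> b < m \<Longrightarrow> (\<Sum>i<m. (ind a i + ind b i) * p i) = p a + p b"
  by (simp add: distrib_right sum.distrib sum_ind del: sum.lessThan_Suc)
lemma sum_ind3: "a < m \<Longrightarrow> b < m \<Longrightarrow> c < m \<Longrightarrow>
   (\<Sum>i<m. (ind a i + ind b i + x * ind c i) * p i) = p a + p b + x * p c"
  by (simp add: distrib_right sum.distrib sum_ind mult.assoc sum_distrib_left[symmetric] del: sum.lessThan_Suc)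
lemma sum_ind3': "a < m \<Longrightarrow> b < m \<Longrightarrow> c < m \<Longrightarrow>
   (\<Sum>i<m. (ind a i + x * ind b i + ind c i) * p i) = p a + x * p b + p c"
  by (simp add: distrib_right sum.distrib sum_ind mult.assoc sum_distrib_left[symmetric] del: sum.lessThan_Suc)
lemma sum_ind3'': "a < m \<Longrightarrow> b < m \<Longrightarrow> c < m \<Longrightarrow>
   (\<Sum>i<m. (ind a i + ind b i + ind c i) * p i) = p a + p b + p c"
  by (simp add: distrib_right sum.distrib sum_ind del: sum.lessThan_Suc)

lemma dm5: "r < 5 \<Longrightarrow> (5*j + r) div 5 = j" "r < 5 \<Longrightarrow> (5*j+r) mod 5 = (r::nat)"
  by auto

lemma alpha0: "j < n \<Longrightarrow> alpha n (5*j) = (\<lambda>i. ind (7*j) i + ind (7*j+1) i)"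
  by (simp add: alpha_def fun_eq_iff)
lemma alpha1: "j < n \<Longrightarrow> alpha n (5*j+1) = (\<lambda>i. ind (7*j+2) i + ind (7*j+4) i + MM n * ind (7*j+1) i)"
  using dm5[of 1 j] by (simp add: alpha_def fun_eq_iff)
lemma alpha2: "j < n \<Longrightarrow> alpha n (5*j+2) = (\<lambda>i. ind (7*j+3) i + ind (7*j+5) i + MM n * ind (7*j) i)"
  using dm5[of 2 j] by (simp add: alpha_def fun_eq_iff)
lemma alpha3: "j < n \<Longrightarrow> alpha n (5*j+3) = (\<lambda>i. ind (7*j+3) i + 2^(2^j) * ind (7*j+2) i + ind (7*j+6) i)"
  using dm5[of 3 j] by (simp add: alpha_def fun_eq_iff)
lemma alpha4a: "Suc j < n \<Longrightarrow> alpha n (5*j+4) = (\<lambda>i. ind (7*j+9) i + ind (7*j+10) i + ind (7*j+6) i)"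
  using dm5[of 4 j] by (simp add: alpha_def fun_eq_iff)
lemma alpha4b: "Suc j = n \<Longrightarrow> alpha n (5*j+4) = (\<lambda>i. ind (7*n) i + ind (7*j+6) i)"
  using dm5[of 4 j] by (simp add: alpha_def fun_eq_iff)
lemma alpha5: "alpha n (5*n) = (\<lambda>i. ind 2 i + ind 3 i)"
  by (simp add: alpha_def fun_eq_iff)

lemma DD0: "j < n \<Longrightarrow> DD n (5*j) p = p (7*j) + p (7*j+1)"
  unfolding DD_def by (simp only: alpha0) (rule sum_ind2; simp)
lemma DD1: "j < n \<Longrightarrow> DD n (5*j+1) p = p (7*j+2) + p (7*j+4) + MM n * p (7*j+1)"
  unfolding DD_def by (simp only: alpha1) (rule sum_ind3; simp)
lemma DD2: "j < n \<Longrightarrow> DD n (5*j+2) p = p (7*j+3) + p (7*j+5) + MM n * p (7*j)"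
  unfolding DD_def by (simp only: alpha2) (rule sum_ind3; simp)
lemma DD3: "j < n \<Longrightarrow> DD n (5*j+3) p = p (7*j+3) + 2^(2^j) * p (7*j+2) + p (7*j+6)"
  unfolding DD_def by (simp only: alpha3) (rule sum_ind3'; simp)
lemma DD4a: "Suc j < n \<Longrightarrow> DD n (5*j+4) p = p (7*j+9) + p (7*j+10) + p (7*j+6)"
  unfolding DD_def by (simp only: alpha4a) (rule sum_ind3''; simp)
lemma DD4b: "Suc j = n \<Longrightarrow> DD n (5*j+4) p = p (7*n) + p (7*j+6)"
  unfolding DD_def by (simp only: alpha4b) (rule sum_ind2; simp)
lemma DD5: "0 < n \<Longrightarrow> DD n (5*n) p = p 2 + p 3"
  unfolding DD_def by (simp only: alpha5) (rule sum_ind2; simp)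



lemma cc0: "j < n \<Longrightarrow> cc n (5*j) = 1" by (simp add: cc_def)
lemma ccr: "j < n \<Longrightarrow> 0 < r \<Longrightarrow> r < 5 \<Longrightarrow> cc n (5*j+r) = MM n"
  by (simp add: cc_def)
lemma cc5: "cc n (5*n) = 1" by (simp add: cc_def)

lemma MMpos: "0 < MM n" by (simp add: MM_def)

lemma chain:
  assumes n1: "1 \<le> n" and eqs: "\<forall>k<5*n+1. DD n k p = cc n k"
  shows "\<forall>j\<le>n. (if j < n then p (7*j+2) + p (7*j+3) else p (7*n)) = 2^(\<Sum>i<j. p (7*i) * 2^i)"
proof (intro allI impI)
  fix j assume "j \<le> n"
  then show "(if j < n then p (7*j+2) + p (7*j+3) else p (7*n)) = 2^(\<Sum>i<j. p (7*i) * 2^i)"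
  proof (induction j)
    case 0
    have "DD n (5*n) p = cc n (5*n)" using eqs by simp
    then show ?case using n1 DD5[of n p] cc5[of n] by (simp add: numeral_2_eq_2)
  next
    case (Suc j)
    then have jn: "j < n" by simp
    have IH: "p (7*j+2) + p (7*j+3) = 2^(\<Sum>i<j. p (7*i) * 2^i)" using Suc jn by simp
    have e0: "p (7*j) + p (7*j+1) = 1"
      using eqs[rule_format, of "5*j"] jn DD0[OF jn] cc0[OF jn] by simp
    have e1: "p (7*j+2) + p (7*j+4) + MM n * p (7*j+1) = MM n"
      using eqs[rule_format, of "5*j+1"] jn DD1[OF jn] ccr[OF jn, of 1] by simp
    have e2: "p (7*j+3) + p (7*j+5) + MM n * p (7*j) = MM n"
      using eqs[rule_format, of "5*j+2"] jn DD2[OF jn] ccr[OF jn, of 2] by simp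
    have e3: "p (7*j+3) + 2^(2^j) * p (7*j+2) + p (7*j+6) = MM n"
      using eqs[rule_format, of "5*j+3"] jn DD3[OF jn] ccr[OF jn, of 3] by simp
    have e4: "(if Suc j < n then p (7*Suc j+2) + p (7*Suc j+3) else p (7*n)) + p (7*j+6) = MM n"
    proof (cases "Suc j < n")
      case True
      then show ?thesis
        using eqs[rule_format, of "5*j+4"] jn DD4a[OF True] ccr[OF jn, of 4] by (simp add: ac_simps)
    next
      case False
      then have "Suc j = n" using jn by simp
      then show ?thesis
        using eqs[rule_format, of "5*j+4"] jn DD4b[of j n] ccr[OF jn, of 4] False by simp
    qed
    have y: "(if Suc j < n then p (7*Suc j+2) + p (7*Suc j+3) else p (7*n)) = p (7*j+3) + 2^(2^j) * p (7*j+2)"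
      using e3 e4 by simp
    have sumS: "(\<Sum>i<Suc j. p (7*i) * 2^i) = (\<Sum>i<j. p (7*i) * 2^i) + p (7*j) * 2^j" by simp
    show ?case
    proof (cases "p (7*j) = 0")
      case True
      then have "p (7*j+1) = 1" using e0 by simp
      then have "p (7*j+2) = 0" using e1 by simp
      then show ?thesis using y IH sumS True by simp
    next
      case False
      then have b1: "p (7*j) = 1" using e0 by simp
      then have "p (7*j+3) = 0" using e2 by simp
      then show ?thesis using y IH sumS b1 by (simp add: power_add)
    qed
  qed
qed

lemma bits01:
  assumes n1: "1 \<le> n" and eqs: "\<forall>k<5*n+1. DD n k p = cc n k" and j: "j < n"
  shows "p (7*j) \<le> 1"
  using eqs[rule_format, of "5*j"] j DD0[OF j] cc0[OF j] by simp

lemma expo_bound: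
  assumes "\<forall>j<n. (b j::nat) \<le> 1" shows "(\<Sum>j<n. b j * 2^j) < 2^n"
proof -
  have "(\<Sum>j<n. b j * 2^j) \<le> (\<Sum>j<n. 2^j)" using assms by (intro sum_mono) simp
  also have "\<dots> = 2^n - 1" by (induction n) auto
  also have "\<dots> < 2^n" by simp
  finally show ?thesis .
qed

lemma bin_structure:
  assumes n1: "1 \<le> n" and eqs: "\<forall>k<5*n+1. DD n k p = cc n k"
  shows "p (7*n) = 2^(\<Sum>j<n. p (7*j) * 2^j) \<and> (\<Sum>j<n. p (7*j) * 2^j) < 2^n"
proof
  show "p (7*n) = 2^(\<Sum>j<n. p (7*j) * 2^j)" using chain[OF n1 eqs] by auto
  show "(\<Sum>j<n. p (7*j) * 2^j) < 2^n" using bits01[OF n1 eqs] by (intro expo_bound) auto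
qed



definition beta :: "nat \<Rightarrow> nat \<Rightarrow> nat" where "beta v j = v div 2^j mod 2"
definition yv :: "nat \<Rightarrow> nat \<Rightarrow> nat" where "yv v j = 2^(v mod 2^j)"

definition PP :: "nat \<Rightarrow> nat \<Rightarrow> nat \<Rightarrow> nat" where
"PP n v i = (if i < 7*n then
   (if i mod 7 = 0 then beta v (i div 7)
    else if i mod 7 = 1 then 1 - beta v (i div 7)
    else if i mod 7 = 2 then beta v (i div 7) * yv v (i div 7)
    else if i mod 7 = 3 then (1 - beta v (i div 7)) * yv v (i div 7)
    else if i mod 7 = 4 then beta v (i div 7) * (MM n - yv v (i div 7))
    else if i mod 7 = 5 then (1 - beta v (i div 7)) * (MM n - yv v (i div 7))
    else MM n - yv v (Suc (i div 7)))
  else if i = 7*n then 2^v else 0)"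

lemma dm7: "r < 7 \<Longrightarrow> (7*j + r) div 7 = j" "r < 7 \<Longrightarrow> (7*j+r) mod 7 = (r::nat)"
  by auto

lemma PP0: "j < n \<Longrightarrow> PP n v (7*j) = beta v j" by (simp add: PP_def)
lemma PP1: "j < n \<Longrightarrow> PP n v (7*j+1) = 1 - beta v j" using dm7[of 1 j] by (simp add: PP_def)
lemma PP2: "j < n \<Longrightarrow> PP n v (7*j+2) = beta v j * yv v j" using dm7[of 2 j] by (simp add: PP_def)
lemma PP3: "j < n \<Longrightarrow> PP n v (7*j+3) = (1 - beta v j) * yv v j" using dm7[of 3 j] by (simp add: PP_def)
lemma PP4: "j < n \<Longrightarrow> PP n v (7*j+4) = beta v j * (MM n - yv v j)" using dm7[of 4 j] by (simp add: PP_def)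
lemma PP5: "j < n \<Longrightarrow> PP n v (7*j+5) = (1 - beta v j) * (MM n - yv v j)" using dm7[of 5 j] by (simp add: PP_def)
lemma PP6: "j < n \<Longrightarrow> PP n v (7*j+6) = MM n - yv v (Suc j)" using dm7[of 6 j] by (simp add: PP_def)
lemma PPY: "PP n v (7*n) = 2^v" by (simp add: PP_def)
lemma PPout: "7*n < i \<Longrightarrow> PP n v i = 0" by (simp add: PP_def)

lemma beta01: "beta v j = 0 \<or> beta v j = 1" unfolding beta_def by presburger

lemma yv_step: "yv v (Suc j) = (if beta v j = 1 then 2^(2^j) * yv v j else yv v j)"
proof -
  have "v mod 2^Suc j = 2^j * beta v j + v mod 2^j"
    using mod_mult2_eq[of v "2^j" 2] by (simp add: beta_def mult.commute)
  then show ?thesis using beta01[of v j]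
    by (auto simp: yv_def power_add power_mult mult.commute)
qed

lemma yv_le: "j \<le> n \<Longrightarrow> yv v j \<le> MM n"
proof -
  assume "j \<le> n"
  have "v mod 2^j < 2^j" by simp
  also have "(2::nat)^j \<le> 2^n" using \<open>j \<le> n\<close> by simp
  finally have "v mod 2^j \<le> 2^n" by simp
  then show ?thesis unfolding yv_def MM_def by (simp add: power_increasing)
qed

lemma yv0: "yv v 0 = 1" by (simp add: yv_def)
lemma yvn: "v < 2^n \<Longrightarrow> yv v n = 2^v" by (simp add: yv_def)

lemma K_le: "j < n \<Longrightarrow> (2::nat)^(2^j) \<le> MM n"
  unfolding MM_def by (simp add: power_increasing)

lemma PP_eqs:
  assumes n1: "1 \<le> n" and v: "v < 2^n"
  shows "\<forall>k<5*n+1. DD n k (PP n v) = cc n k"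
proof (intro allI impI)
  fix k assume k: "k < 5*n+1"
  show "DD n k (PP n v) = cc n k"
  proof (cases "k = 5*n")
    case True
    then show ?thesis using n1 DD5[of n] cc5[of n] PP2[of 0 n v] PP3[of 0 n v] yv0[of v] beta01[of v 0]
      by (auto simp: numeral_2_eq_2)
  next
    case False
    define j where "j = k div 5"
    define r where "r = k mod 5"
    have kj: "k = 5*j + r" unfolding j_def r_def by simp
    have jn: "j < n" using k False unfolding j_def by auto
    have r5: "r < 5" unfolding r_def by simp
    have yj: "yv v j \<le> MM n" using jn by (intro yv_le) simp
    have yS: "yv v (Suc j) \<le> MM n" using jn by (intro yv_le) simp
    have Kl: "(2::nat)^(2^j) \<le> MM n" using K_le[OF jn] .
    have "r = 0 \<or> r = 1 \<or> r = 2 \<or> r = 3 \<or> r = 4" using r5 by auto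
    then show ?thesis
    proof (elim disjE)
      assume "r = 0"
      then show ?thesis using kj DD0[OF jn] cc0[OF jn] PP0[OF jn] PP1[OF jn] beta01[of v j] by auto
    next
      assume "r = 1"
      then show ?thesis using kj DD1[OF jn] ccr[OF jn, of 1] PP1[OF jn] PP2[OF jn] PP4[OF jn] beta01[of v j] yj by auto
    next
      assume "r = 2"
      then show ?thesis using kj DD2[OF jn] ccr[OF jn, of 2] PP0[OF jn] PP3[OF jn] PP5[OF jn] beta01[of v j] yj by auto
    next
      assume "r = 3"
      then show ?thesis using kj DD3[OF jn] ccr[OF jn, of 3] PP2[OF jn] PP3[OF jn] PP6[OF jn] beta01[of v j] yS yv_step[of v j] by auto
    next
      assume r4: "r = 4"
      show ?thesis
      proof (cases "Suc j < n")
        case True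
        have "yv v (Suc j) = PP n v (7*Suc j+2) + PP n v (7*Suc j+3)"
          using PP2[OF True] PP3[OF True] beta01[of v "Suc j"] by auto
        then show ?thesis using r4 kj DD4a[OF True] ccr[OF jn, of 4] PP6[OF jn] yS
          by (simp add: add.commute)
      next
        case False
        then have sj: "Suc j = n" using jn by simp
        have "yv v (Suc j) = 2^v" using sj yvn[OF v] by simp
        then show ?thesis using r4 kj DD4b[OF sj] ccr[OF jn, of 4] PP6[OF jn] yS PPY[of n v]
          by simp
      qed
    qed
  qed
qed



definition aa :: "nat \<Rightarrow> nat \<Rightarrow> nat" where "aa n i = (\<Sum>v<2^n. PP n v i)"
definition BB :: "nat \<Rightarrow> nat" where "BB n = Suc (\<Sum>k<5*n+1. cc n k + DD n k (aa n))"
definition ss :: "nat \<Rightarrow> nat \<Rightarrow> nat" where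
  "ss n i = (if i < 7*n+1 then (\<Sum>k<5*n+1. alpha n k i * BB n ^ k) else 1)"
definition CC :: "nat \<Rightarrow> nat" where "CC n = (\<Sum>k<5*n+1. cc n k * BB n ^ k)"

lemma size_id: "(\<Sum>i<7*n+1. ss n i * p i) = (\<Sum>k<5*n+1. DD n k p * BB n ^ k)"
proof -
  have "(\<Sum>i<7*n+1. ss n i * p i) = (\<Sum>i<7*n+1. \<Sum>k<5*n+1. alpha n k i * BB n ^ k * p i)"
    by (rule sum.cong) (simp_all add: ss_def sum_distrib_right del: sum.lessThan_Suc)
  also have "\<dots> = (\<Sum>k<5*n+1. \<Sum>i<7*n+1. alpha n k i * BB n ^ k * p i)"
    by (rule sum.swap)
  also have "\<dots> = (\<Sum>k<5*n+1. DD n k p * BB n ^ k)"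
    unfolding DD_def by (rule sum.cong) (simp_all add: sum_distrib_right sum_distrib_left mult_ac del: sum.lessThan_Suc)
  finally show ?thesis .
qed

lemma size_restrict:
  assumes "\<forall>i. 7*n+1 \<le> i \<and> i < 12*n+4 \<longrightarrow> p i = 0"
  shows "(\<Sum>i<12*n+4. ss n i * p i) = (\<Sum>i<7*n+1. ss n i * p i)"
  by (rule sum.mono_neutral_right) (use assms in auto)

lemma BB_pos: "0 < BB n" by (simp add: BB_def)

lemma CC_ge1: "1 \<le> CC n"
proof -
  have "cc n (5*n) * BB n ^ (5*n) \<le> CC n"
    unfolding CC_def by (rule member_le_sum) auto
  moreover have "1 \<le> BB n ^ (5*n)" using BB_pos[of n] by (metis One_nat_def Suc_leI zero_less_power)
  ultimately show ?thesis using cc5[of n] by simp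
qed

lemma alpha_le_cc:
  assumes k: "k < 5*n+1" shows "alpha n k i \<le> cc n k"
proof (cases "k = 5*n")
  case True
  then show ?thesis using alpha5[of n] cc5[of n] by (auto simp: ind_def)
next
  case False
  define j where "j = k div 5"
  define r where "r = k mod 5"
  have kj: "k = 5*j + r" unfolding j_def r_def by simp
  have jn: "j < n" using k False unfolding j_def by auto
  have "r = 0 \<or> r = 1 \<or> r = 2 \<or> r = 3 \<or> r = 4" unfolding r_def by auto
  then show ?thesis
  proof (elim disjE)
    assume "r = 0" then show ?thesis using kj alpha0[OF jn] cc0[OF jn] by (auto simp: ind_def)
  next
    assume "r = 1" then show ?thesis using kj alpha1[OF jn] ccr[OF jn, of 1] MMpos[of n] by (auto simp: ind_def)
  next
    assume "r = 2" then show ?thesis using kj alpha2[OF jn] ccr[OF jn, of 2] MMpos[of n] by (auto simp: ind_def)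
  next
    assume "r = 3" then show ?thesis using kj alpha3[OF jn] ccr[OF jn, of 3] MMpos[of n] K_le[OF jn] by (auto simp: ind_def)
  next
    assume r4: "r = 4"
    have M1: "1 \<le> MM n" using MMpos[of n] by simp
    show ?thesis
    proof (cases "Suc j < n")
      case True then show ?thesis using r4 kj alpha4a[OF True] ccr[OF jn, of 4] M1 by (auto simp: ind_def)
    next
      case False then have "Suc j = n" using jn by simp
      then show ?thesis using r4 kj alpha4b[of j n] ccr[OF jn, of 4] M1 by (auto simp: ind_def)
    qed
  qed
qed

lemma ss_le: "ss n i \<le> CC n"
proof (cases "i < 7*n+1")
  case True
  have "(\<Sum>k<5*n+1. alpha n k i * BB n ^ k) \<le> (\<Sum>k<5*n+1. cc n k * BB n ^ k)"
    by (rule sum_mono) (simp add: alpha_le_cc mult_right_mono)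
  then show ?thesis using True by (simp add: ss_def CC_def)
next
  case False then show ?thesis using CC_ge1[of n] by (simp add: ss_def)
qed

lemma alpha_pos:
  assumes n1: "1 \<le> n" and i: "i < 7*n+1" shows "\<exists>k<5*n+1. 0 < alpha n k i"
proof (cases "i = 7*n")
  case True
  obtain j where j: "Suc j = n" using n1 by (cases n) auto
  have "alpha n (5*j+4) i = 1 + ind (7*j+6) i" using alpha4b[OF j] True by (simp add: ind_def)
  moreover have "5*j+4 < 5*n+1" using j by simp
  ultimately show ?thesis by (intro exI[of _ "5*j+4"]) simp
next
  case False
  define j where "j = i div 7"
  define r where "r = i mod 7"
  have ij: "i = 7*j + r" unfolding j_def r_def by simp
  have jn: "j < n" using i False unfolding j_def by auto
  have "r = 0 \<or> r = 1 \<or> r = 2 \<or> r = 3 \<or> r = 4 \<or> r = 5 \<or> r = 6" unfolding r_def by auto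
  then show ?thesis
  proof (elim disjE)
    assume "r = 0" then show ?thesis using ij jn alpha0[OF jn] by (intro exI[of _ "5*j"]) (auto simp: ind_def)
  next
    assume "r = 1" then show ?thesis using ij jn alpha0[OF jn] by (intro exI[of _ "5*j"]) (auto simp: ind_def)
  next
    assume "r = 2" then show ?thesis using ij jn alpha1[OF jn] by (intro exI[of _ "5*j+1"]) (auto simp: ind_def)
  next
    assume "r = 3" then show ?thesis using ij jn alpha2[OF jn] by (intro exI[of _ "5*j+2"]) (auto simp: ind_def)
  next
    assume "r = 4" then show ?thesis using ij jn alpha1[OF jn] by (intro exI[of _ "5*j+1"]) (auto simp: ind_def)
  next
    assume "r = 5" then show ?thesis using ij jn alpha2[OF jn] by (intro exI[of _ "5*j+2"]) (auto simp: ind_def)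
  next
    assume "r = 6" then show ?thesis using ij jn alpha3[OF jn] by (intro exI[of _ "5*j+3"]) (auto simp: ind_def)
  qed
qed

lemma ss_pos: assumes n1: "1 \<le> n" shows "0 < ss n i"
proof (cases "i < 7*n+1")
  case True
  then obtain k where k: "k < 5*n+1" "0 < alpha n k i" using alpha_pos[OF n1] by blast
  have "alpha n k i * BB n ^ k \<le> (\<Sum>k<5*n+1. alpha n k i * BB n ^ k)"
    by (rule member_le_sum) (use k in auto)
  moreover have "0 < alpha n k i * BB n ^ k" using k BB_pos[of n] by simp
  ultimately have "0 < (\<Sum>k<5*n+1. alpha n k i * BB n ^ k)" by linarith
  with True show ?thesis by (simp add: ss_def del: sum.lessThan_Suc)
next
  case False then show ?thesis by (simp add: ss_def)
qed

lemma aa_zero: "7*n < i \<Longrightarrow> aa n i = 0" by (simp add: aa_def PPout)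

lemma PP_size:
  assumes n1: "1 \<le> n" and v: "v < 2^n"
  shows "(\<Sum>i<12*n+4. ss n i * PP n v i) = CC n"
proof -
  have "(\<Sum>i<12*n+4. ss n i * PP n v i) = (\<Sum>i<7*n+1. ss n i * PP n v i)"
    by (rule size_restrict) (auto simp: PPout)
  also have "\<dots> = (\<Sum>k<5*n+1. DD n k (PP n v) * BB n ^ k)" by (rule size_id)
  also have "\<dots> = CC n" unfolding CC_def using PP_eqs[OF n1 v] by (intro sum.cong) auto
  finally show ?thesis .
qed

lemma PP_inj: "inj_on (PP n) {..<2^n}"
proof (rule inj_onI)
  fix v w assume "PP n v = PP n w"
  then have "PP n v (7*n) = PP n w (7*n)" by simp
  then have "(2::nat)^v = 2^w" by (simp add: PPY)
  then show "v = w" by simp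
qed

lemma instance_props:
  assumes n1: "1 \<le> n"
  shows "valid_instance (12*n+4) (ss n) (aa n) (CC n) \<and>
    (\<forall>x. ilp_optimal (12*n+4) (ss n) (aa n) (CC n) x \<longrightarrow> 2^n \<le> card (supp x))"
proof -
  define d where "d = 12*n+4"
  define X0 where "X0 = (\<lambda>p. if p \<in> PP n ` {..<2^n} then 1 else (0::nat))"
  have suppX0: "supp X0 = PP n ` {..<2^n}" unfolding supp_def X0_def by auto
  have feas0: "ilp_feasible d (ss n) (aa n) (CC n) X0"
    unfolding ilp_feasible_def
  proof (intro conjI ballI allI impI)
    show "finite (supp X0)" using suppX0 by simp
  next
    fix p assume "p \<in> supp X0"
    then obtain v where v: "v < 2^n" and p: "p = PP n v" using suppX0 by auto
    show "is_config d (ss n) (CC n) p"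
      unfolding is_config_def d_def p using PP_size[OF n1 v] by (auto simp: PPout)
  next
    fix i assume "i < d"
    have "(\<Sum>p\<in>supp X0. X0 p * p i) = (\<Sum>p\<in>PP n ` {..<2^n}. p i)"
      unfolding suppX0 by (rule sum.cong) (auto simp: X0_def)
    also have "\<dots> = (\<Sum>v<2^n. PP n v i)" by (rule sum.reindex_cong[OF PP_inj]) auto
    finally show "(\<Sum>p\<in>supp X0. X0 p * p i) = aa n i" by (simp add: aa_def)
  qed
  have val0: "ilp_value X0 = 2^n"
  proof -
    have "ilp_value X0 = (\<Sum>p\<in>PP n ` {..<2^n}. 1)"
      unfolding ilp_value_def suppX0 by (rule sum.cong) (auto simp: X0_def)
    also have "\<dots> = 2^n" using card_image[OF PP_inj] by simp
    finally show ?thesis .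
  qed
  obtain xo where xo: "ilp_feasible d (ss n) (aa n) (CC n) xo"
    "\<forall>y. ilp_feasible d (ss n) (aa n) (CC n) y \<longrightarrow> ilp_value xo \<le> ilp_value y"
    using ex_has_least_nat[of "ilp_feasible d (ss n) (aa n) (CC n)" X0 ilp_value] feas0 by blast
  have valid: "valid_instance d (ss n) (aa n) (CC n)"
    unfolding valid_instance_def ilp_optimal_def
    using xo ss_pos[OF n1] ss_le by blast
  have tot0: "(\<Sum>i<d. ss n i * aa n i) = 2^n * CC n"
  proof -
    have "(\<Sum>i<d. ss n i * aa n i) = (\<Sum>i<d. \<Sum>v<2^n. ss n i * PP n v i)"
      by (simp add: aa_def sum_distrib_left)
    also have "\<dots> = (\<Sum>v<2^n. \<Sum>i<d. ss n i * PP n v i)" by (rule sum.swap)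
    also have "\<dots> = (\<Sum>v<(2::nat)^n. CC n)"
      unfolding d_def by (rule sum.cong) (auto simp: PP_size[OF n1])
    finally show ?thesis by simp
  qed
  have main: "2^n \<le> card (supp x)" if opt: "ilp_optimal d (ss n) (aa n) (CC n) x" for x
  proof -
    define S where "S = supp x"
    have fin: "finite S" and cfg: "\<forall>p\<in>S. is_config d (ss n) (CC n) p"
      and cov: "\<forall>i<d. (\<Sum>p\<in>S. x p * p i) = aa n i"
      using opt unfolding ilp_optimal_def ilp_feasible_def S_def by auto
    have valle: "(\<Sum>p\<in>S. x p) \<le> 2^n"
      using opt feas0 val0 unfolding ilp_optimal_def ilp_value_def S_def by metis
    have xpos: "\<And>p. p \<in> S \<Longrightarrow> 1 \<le> x p" unfolding S_def supp_def by auto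
    have ple: "p i \<le> aa n i" if p: "p \<in> S" and i: "i < d" for p i
    proof -
      have "x p * p i \<le> (\<Sum>q\<in>S. x q * q i)" by (rule member_le_sum) (use p fin in auto)
      moreover have "p i \<le> x p * p i" using xpos[OF p] by simp
      ultimately have "p i \<le> (\<Sum>q\<in>S. x q * q i)" by (rule le_trans[rotated])
      then show ?thesis using cov i by simp
    qed
    have pzero: "\<forall>i. 7*n+1 \<le> i \<and> i < 12*n+4 \<longrightarrow> p i = 0" if p: "p \<in> S" for p
      using ple[OF p] aa_zero[of n] unfolding d_def by fastforce
    define sz where "sz p = (\<Sum>i<d. ss n i * p i)" for p
    have sz_eq: "sz p = (\<Sum>k<5*n+1. DD n k p * BB n ^ k)" if p: "p \<in> S" for p
      unfolding sz_def d_def using size_restrict[OF pzero[OF p]] size_id by simp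
    have szle: "sz p \<le> CC n" if "p \<in> S" for p
      using cfg that unfolding is_config_def sz_def by auto
    have total: "(\<Sum>p\<in>S. x p * sz p) = 2^n * CC n"
    proof -
      have "(\<Sum>p\<in>S. x p * sz p) = (\<Sum>p\<in>S. \<Sum>i<d. ss n i * (x p * p i))"
        unfolding sz_def by (simp add: sum_distrib_left mult_ac)
      also have "\<dots> = (\<Sum>i<d. \<Sum>p\<in>S. ss n i * (x p * p i))" by (rule sum.swap)
      also have "\<dots> = (\<Sum>i<d. ss n i * aa n i)"
        by (rule sum.cong) (auto simp: sum_distrib_left[symmetric] cov)
      finally show ?thesis using tot0 by simp
    qed
    have le1: "(\<Sum>p\<in>S. x p * sz p) \<le> (\<Sum>p\<in>S. x p * CC n)"
      by (rule sum_mono) (simp add: szle)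
    have eq2: "(\<Sum>p\<in>S. x p * CC n) = (\<Sum>p\<in>S. x p) * CC n" by (simp add: sum_distrib_right)
    have CC1: "1 \<le> CC n" by (rule CC_ge1)
    have "2^n * CC n \<le> (\<Sum>p\<in>S. x p) * CC n" using total le1 eq2 by simp
    then have "2^n \<le> (\<Sum>p\<in>S. x p)" using CC1 by simp
    then have val: "(\<Sum>p\<in>S. x p) = 2^n" using valle by simp
    have "(\<Sum>p\<in>S. x p * CC n - x p * sz p) = (\<Sum>p\<in>S. x p * CC n) - (\<Sum>p\<in>S. x p * sz p)"
      by (rule sum_subtractf_nat) (simp add: szle)
    also have "\<dots> = 0" using total eq2 val by simp
    finally have "\<forall>p\<in>S. x p * CC n - x p * sz p = 0" using fin by simp
    then have full: "sz p = CC n" if "p \<in> S" for p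
    proof -
      have "x p * CC n \<le> x p * sz p" using \<open>\<forall>p\<in>S. x p * CC n - x p * sz p = 0\<close> that by simp
      then have "CC n \<le> sz p" using xpos[OF that] by simp
      then show ?thesis using szle[OF that] by simp
    qed
    have eqs: "\<forall>k<5*n+1. DD n k p = cc n k" if p: "p \<in> S" for p
    proof -
      have Dle: "DD n k p \<le> DD n k (aa n)" for k
        unfolding DD_def by (rule sum_mono) (use ple[OF p] in \<open>auto simp: d_def intro: mult_left_mono\<close>)
      have Dlt: "DD n k (aa n) < BB n" "cc n k < BB n" if "k < 5*n+1" for k
      proof -
        have "cc n k + DD n k (aa n) \<le> (\<Sum>k<5*n+1. cc n k + DD n k (aa n))"
          by (rule member_le_sum) (use that in auto)
        then show "DD n k (aa n) < BB n" "cc n k < BB n" unfolding BB_def by auto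
      qed
      have E: "(\<Sum>k<5*n+1. DD n k p * BB n ^ k) = (\<Sum>k<5*n+1. cc n k * BB n ^ k)"
        using full[OF p] sz_eq[OF p] unfolding CC_def by simp
      have B1: "\<forall>k<5*n+1. DD n k p < BB n"
      proof (intro allI impI)
        fix k assume "k < 5*n+1"
        show "DD n k p < BB n" using le_less_trans[OF Dle Dlt(1)[OF \<open>k < 5*n+1\<close>]] .
      qed
      have B2: "\<forall>k<5*n+1. cc n k < BB n" using Dlt(2) by blast
      show ?thesis using digits_unique[OF B1 B2 E] .
    qed
    define e where "e p = (\<Sum>j<n. p (7*j) * 2^j)" for p :: "nat \<Rightarrow> nat"
    have bs: "p (7*n) = 2^(e p) \<and> e p < 2^n" if "p \<in> S" for p
      unfolding e_def using bin_structure[OF n1 eqs[OF that]] .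
    define cnt where "cnt t = (\<Sum>p\<in>{p\<in>S. e p = t}. x p)" for t
    have img: "e ` S \<subseteq> {..<2^n}" using bs by auto
    have cz: "\<forall>t\<ge>2^n. cnt t = 0"
    proof (intro allI impI)
      fix t :: nat assume t: "2^n \<le> t"
      have "{p\<in>S. e p = t} = {}" using bs t by fastforce
      then show "cnt t = 0" unfolding cnt_def by (simp only: sum.empty)
    qed
    have c1: "(\<Sum>t<2^n. cnt t) = (\<Sum>p\<in>S. x p)"
      unfolding cnt_def by (rule sum.group[OF fin _ img]) simp
    have c2: "(\<Sum>t<2^n. cnt t * 2^t) = 2^(2^n) - 1"
    proof -
      have "(\<Sum>t<2^n. cnt t * 2^t) = (\<Sum>t<2^n. \<Sum>p\<in>{p\<in>S. e p = t}. x p * 2^(e p))"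
        unfolding cnt_def by (rule sum.cong) (auto simp: sum_distrib_right)
      also have "\<dots> = (\<Sum>p\<in>S. x p * 2^(e p))" by (rule sum.group[OF fin _ img]) simp
      also have "\<dots> = (\<Sum>p\<in>S. x p * p (7*n))" by (rule sum.cong) (use bs in auto)
      also have "\<dots> = aa n (7*n)" using cov unfolding d_def by simp
      also have "\<dots> = (\<Sum>v<2^n. 2^v)" by (simp add: aa_def PPY)
      also have "\<dots> = 2^(2^n) - 1" by (rule pow2_sum)
      finally show ?thesis .
    qed
    have pc: "\<forall>t<2^n. cnt t \<le> 1"
      using popcount[rule_format, OF cz[rule_format] c2] c1 val by simp
    have x1: "x p \<le> 1" if p: "p \<in> S" for p
    proof -
      have "x p \<le> cnt (e p)" unfolding cnt_def by (rule member_le_sum) (use p fin in auto)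
      then show ?thesis using pc bs[OF p] by (meson le_trans)
    qed
    have "(\<Sum>p\<in>S. x p) \<le> (\<Sum>p\<in>S. 1)" by (rule sum_mono) (use x1 in auto)
    then show ?thesis using val unfolding S_def by simp
  qed
  show ?thesis using valid main unfolding d_def by blast
qed

lemma powr_bound:
  assumes n1: "1 \<le> n" and c: "2^n \<le> k"
  shows "2 powr (1/16 * real (12*n+4)) \<le> real (k::nat)"
proof -
  have "1/16 * real (12*n+4) \<le> real n" using n1 by simp
  then have "2 powr (1/16 * real (12*n+4)) \<le> 2 powr real n" by (rule powr_mono) simp
  also have "\<dots> = 2^n" by (simp add: powr_realpow)
  also have "\<dots> \<le> real k" using c by (metis of_nat_le_iff of_nat_numeral of_nat_power)
  finally show ?thesis .
qed

theorem theorem1: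
  shows "(\<exists>c::real. c > 0 \<and>
            infinite {d::nat. \<exists>s a C. valid_instance d s a C \<and>
               (\<forall>x. ilp_optimal d s a C x \<longrightarrow> real (card (supp x)) \<ge> 2 powr (c * real d))})
       \<and> (\<forall>d'::nat. d' \<ge> 1 \<longrightarrow>
            (\<exists>s a C. valid_instance (12 * d' + 4) s a C \<and>
               (\<forall>x. ilp_optimal (12 * d' + 4) s a C x \<longrightarrow> card (supp x) \<ge> 2 ^ d' - 1)))"
proof
  define A where "A = {d::nat. \<exists>s a C. valid_instance d s a C \<and>
               (\<forall>x. ilp_optimal d s a C x \<longrightarrow> real (card (supp x)) \<ge> 2 powr ((1/16) * real d))}"
  have mem: "12*n+4 \<in> A" if n1: "1 \<le> n" for n
    unfolding A_def using instance_props[OF n1] powr_bound[OF n1] by blast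
  have "infinite A"
  proof
    assume "finite A"
    then obtain m where m: "\<forall>d\<in>A. d \<le> m" using finite_nat_set_iff_bounded_le by blast
    have "12*(m+1)+4 \<in> A" by (rule mem) simp
    then show False using m by fastforce
  qed
  then show "\<exists>c::real. c > 0 \<and>
            infinite {d::nat. \<exists>s a C. valid_instance d s a C \<and>
               (\<forall>x. ilp_optimal d s a C x \<longrightarrow> real (card (supp x)) \<ge> 2 powr (c * real d))}"
    unfolding A_def by (intro exI[of _ "1/16"]) simp
next
  show "\<forall>d'::nat. d' \<ge> 1 \<longrightarrow>
            (\<exists>s a C. valid_instance (12 * d' + 4) s a C \<and>
               (\<forall>x. ilp_optimal (12 * d' + 4) s a C x \<longrightarrow> card (supp x) \<ge> 2 ^ d' - 1))"
  proof (intro allI impI)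
    fix d' :: nat assume "1 \<le> d'"
    from instance_props[OF this] show "\<exists>s a C. valid_instance (12 * d' + 4) s a C \<and>
               (\<forall>x. ilp_optimal (12 * d' + 4) s a C x \<longrightarrow> card (supp x) \<ge> 2 ^ d' - 1)"
      by (meson diff_le_self le_trans)
  qed
qed

end
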